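(* Suppose that a string $S$ with $|S| \le |Q_k|+4\tau$ contains $Q_k$ as a substring. Then (a) replacing any occurrence of $Q_k$ in $S$ with $Q_k'$ results in $r_k(S)$; (b) replacing any occurrence of $Q'_k$ in $r_k(S)$ with $Q_k$ results in $S$.
   Context: For a string $S$, $S[1..p]$ is a period of $S$ if $S[i]=S[i+p]$ for $1\le i\le |S|-p$, and $\mathrm{per}(S)$ denotes the length of the shortest period of $S$. Let $\tau\ge1$ and $\ell>10\tau$ be integers, $S_k$ a string of length at least $\ell$, and $Q_k = S_k[1+2\tau..\ell]$, so $|Q_k|=\ell-2\tau\ge 8\tau$. Let $\rho=Q_k[1..\mathrm{per}(Q_k)]$. If $\mathrm{per}(Q_k) > 4\tau$, define $Q_k' = \#$, where $\#$ is a special letter not in the main alphabet. Otherwise write $Q_k=\rho^t\rho'$ with $\rho'$ a prefix of $\rho$, and set $Q_k'=\rho^{t'}\rho'$ for some $t'\le t$ chosen so that $8\tau\le |Q_k'|<12\tau$. For any string $S$, define $r_k(S)=\varepsilon$ (the empty string) if $S$ does not contain $Q_k$, and otherwise $r_k(S)$ is the string obtained from $S$ by replacing the first occurrence of $Q_k$ with $Q'_k$. *)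

theory Defs
  imports Main
begin

(* Strings are lists, 0-indexed. p is a period of S (paper: S[1..p] is a period). *)
definition is_period :: "'a list \<Rightarrow> nat \<Rightarrow> bool" where
  "is_period S p \<longleftrightarrow> 0 < p \<and> p \<le> length S \<and>
     (\<forall>i. i + p < length S \<longrightarrow> S ! i = S ! (i + p))"

definition per :: "'a list \<Rightarrow> nat" where
  "per S = (LEAST p. is_period S p)"

definition occ_at :: "'a list \<Rightarrow> 'a list \<Rightarrow> nat \<Rightarrow> bool" where
  "occ_at Q S i \<longleftrightarrow> i + length Q \<le> length S \<and> take (length Q) (drop i S) = Q"

(* Q_k = S_k[1+2tau..l] *)
definition Qk :: "nat \<Rightarrow> nat \<Rightarrow> 'a list \<Rightarrow> 'a list" where
  "Qk tau l Sk = take (l - 2 * tau) (drop (2 * tau) Sk)"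

(* Q' is an admissible choice of Q'_k for Q (hash is the special letter #) *)
definition valid_Q' :: "'a \<Rightarrow> nat \<Rightarrow> 'a list \<Rightarrow> 'a list \<Rightarrow> bool" where
  "valid_Q' hash tau Q Q' \<longleftrightarrow>
     (per Q > 4 * tau \<and> Q' = [hash]) \<or>
     (per Q \<le> 4 * tau \<and>
      (\<exists>t t' \<rho>'. Q = concat (replicate t (take (per Q) Q)) @ \<rho>' \<and>
                 (\<exists>w. \<rho>' @ w = take (per Q) Q) \<and> t' \<le> t \<and>
                 Q' = concat (replicate t' (take (per Q) Q)) @ \<rho>' \<and>
                 8 * tau \<le> length Q' \<and> length Q' < 12 * tau))"

(* r_k(S): replace the first occurrence of Q by Q'; empty string if none *)
definition rk :: "'a list \<Rightarrow> 'a list \<Rightarrow> 'a list \<Rightarrow> 'a list" where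
  "rk Q Q' S = (if \<exists>i. occ_at Q S i
     then (let i = (LEAST i. occ_at Q S i) in take i S @ Q' @ drop (i + length Q) S)
     else [])"

end

theory Submission
  imports Defs
begin

definition pr :: "'a list \<Rightarrow> nat \<Rightarrow> bool" where
  "pr w p \<longleftrightarrow> 0 < p \<and> (\<forall>i. i + p < length w \<longrightarrow> w ! i = w ! (i + p))"

lemma pr_diff:
  assumes "pr w p" "pr w q" "p < q" "p + q \<le> length w"
  shows "pr w (q - p)"
  unfolding pr_def
proof (intro conjI allI impI)
  show "0 < q - p" using assms by simp
  fix i assume i: "i + (q - p) < length w"
  show "w ! i = w ! (i + (q - p))"
  proof (cases "i + q < length w")
    case True
    have "w ! i = w ! (i + q)" using assms(2) True unfolding pr_def by auto
    moreover have "i + (q - p) + p < length w" using True assms(3) by simp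
    then have "w ! (i + (q - p)) = w ! (i + (q - p) + p)"
      using assms(1) unfolding pr_def by blast
    ultimately show ?thesis using assms(3) by (simp add: algebra_simps)
  next
    case False
    hence ip: "i \<ge> p" using assms by simp
    have "w ! (i - p) = w ! (i - p + p)" using assms(1) i ip unfolding pr_def by auto
    moreover have "w ! (i - p) = w ! (i - p + q)" using assms(2) i ip assms(3) unfolding pr_def by auto
    ultimately show ?thesis using ip assms(3) by (simp add: algebra_simps)
  qed
qed

lemma pr_gcd:
  "pr w p \<Longrightarrow> pr w q \<Longrightarrow> p + q \<le> length w \<Longrightarrow> pr w (gcd p q)"
proof (induction "p + q" arbitrary: p q rule: less_induct)
  case less
  show ?case
  proof (cases p q rule: linorder_cases)
    case equal then show ?thesis using less by simp
  next
    case lt: less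
    have "pr w (q - p)" using pr_diff less.prems lt by blast
    moreover have "p > 0" using less.prems unfolding pr_def by simp
    ultimately have "pr w (gcd p (q - p))" using less lt by (intro less.hyps) auto
    moreover have "gcd p (q - p) = gcd p q" using lt
      by (metis gcd.commute gcd_diff1_nat less_imp_le_nat)
    ultimately show ?thesis by simp
  next
    case gt: greater
    have "pr w (p - q)" using pr_diff less.prems gt by (metis add.commute)
    moreover have "q > 0" using less.prems unfolding pr_def by simp
    ultimately have "pr w (gcd (p - q) q)" using less gt by (intro less.hyps) auto
    moreover have "gcd (p - q) q = gcd p q" using gt
      by (simp add: gcd_diff1_nat)
    ultimately show ?thesis by simp
  qed
qed

lemma pr_mod: "pr w p \<Longrightarrow> i < length w \<Longrightarrow> w ! i = w ! (i mod p)"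
proof (induction i rule: less_induct)
  case (less i)
  show ?case
  proof (cases "i < p")
    case True then show ?thesis by simp
  next
    case False
    have p: "p > 0" using less.prems unfolding pr_def by simp
    have "w ! (i - p) = w ! (i - p + p)" using less.prems False unfolding pr_def by auto
    moreover have "w ! (i - p) = w ! ((i - p) mod p)" using less p False by auto
    moreover have "(i - p) mod p = i mod p" using False by (simp add: mod_if)
    ultimately show ?thesis using False by simp
  qed
qed

lemma pr_lift:
  assumes "pr Q' g" "pr Q p" "g dvd p" "p \<le> length Q'" "p \<le> length Q"
    "take p Q = take p Q'"
  shows "pr Q g"
proof -
  have p: "p > 0" using assms unfolding pr_def by simp
  have key: "Q ! k = Q' ! (k mod g)" if "k < length Q" for k
  proof -
    have "Q ! k = Q ! (k mod p)" using pr_mod assms(2) that by blast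
    also have "\<dots> = take p Q ! (k mod p)" using p by simp
    also have "\<dots> = Q' ! (k mod p)" using assms(6) p assms(4) by simp
    also have "\<dots> = Q' ! (k mod p mod g)" using pr_mod assms(1) p assms(4)
      by (meson mod_less_divisor order_less_le_trans)
    also have "\<dots> = Q' ! (k mod g)" using assms(3) by (simp add: mod_mod_cancel)
    finally show ?thesis .
  qed
  show ?thesis unfolding pr_def
  proof (intro conjI allI impI)
    show "0 < g" using assms(1) unfolding pr_def by simp
    fix i assume "i + g < length Q"
    then show "Q ! i = Q ! (i + g)" using key by simp
  qed
qed

lemma rep_nth:
  assumes "length R = p" "p > 0" "\<exists>w. X @ w = R"
  shows "k < length (concat (replicate t R) @ X) \<Longrightarrow> (concat (replicate t R) @ X) ! k = R ! (k mod p)"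
proof (induction t arbitrary: k)
  case 0
  obtain w where w: "X @ w = R" using assms by blast
  have "length X \<le> p" using w assms by auto
  then show ?case using 0 w[symmetric] by (auto simp: nth_append)
next
  case (Suc t)
  show ?case
  proof (cases "k < p")
    case True then show ?thesis using assms by (simp add: nth_append)
  next
    case False
    then have "(concat (replicate (Suc t) R) @ X) ! k = (concat (replicate t R) @ X) ! (k - p)"
      using assms by (simp add: nth_append)
    also have "\<dots> = R ! ((k - p) mod p)" using Suc False assms by auto
    also have "(k - p) mod p = k mod p" using False by (simp add: mod_if)
    finally show ?thesis .
  qed
qed

lemma rep_pr:
  assumes "length R = p" "p > 0" "\<exists>w. X @ w = R"
  shows "pr (concat (replicate t R) @ X) p"
  unfolding pr_def using rep_nth[OF assms] assms(2) by auto

lemma rep_take: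
  assumes "c \<le> t"
  shows "take (c * length R) (concat (replicate t R) @ X) = concat (replicate c R)"
proof -
  have "concat (replicate t R) = concat (replicate c R) @ concat (replicate (t - c) R)"
    using assms by (metis concat_append le_add_diff_inverse replicate_add)
  moreover have "length (concat (replicate c R)) = c * length R" by (induction c) auto
  ultimately show ?thesis by simp
qed

lemma rep_comm: "concat (replicate c R) @ concat (replicate e R) = concat (replicate e R) @ concat (replicate c R)"
  by (metis add.commute concat_append replicate_add)

lemma dvd_shift:
  assumes "W @ B = C @ W @ B'" "length C + p \<le> length W" "pr W p"
    "\<forall>g. pr W g \<longrightarrow> g dvd p \<longrightarrow> g = p"
  shows "p dvd length C \<and> C = take (length C) W"
proof
  show "C = take (length C) W"
  proof -
    have "take (length C) (W @ B) = C" using assms(1) by simp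
    then show ?thesis using assms(2) by simp
  qed
  show "p dvd length C"
  proof (cases "C = []")
    case True then show ?thesis by simp
  next
    case False
    have "pr W (length C)" unfolding pr_def
    proof (intro conjI allI impI)
      show "0 < length C" using False by simp
      fix i assume i: "i + length C < length W"
      have "(W @ B) ! (i + length C) = (C @ W @ B') ! (i + length C)" using assms(1) by simp
      then show "W ! i = W ! (i + length C)" using i by (simp add: nth_append)
    qed
    then have "pr W (gcd p (length C))" using pr_gcd assms by (metis add.commute)
    then have "gcd p (length C) = p" using assms(4) by simp
    then show ?thesis by (metis gcd_dvd2)
  qed
qed

lemma hash_split:
  assumes "x \<notin> set A" "x \<notin> set B" "A @ x # B = u @ x # v"
  shows "u = A \<and> v = B"
  using assms
  by (auto simp: append_eq_append_conv2 Cons_eq_append_conv append_eq_Cons_conv)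

lemma generic:
  assumes ok: "\<And>C B B'. length C \<le> b \<Longrightarrow> W1 @ B = C @ W1 @ B' \<Longrightarrow> W2 @ B = C @ W2 @ B'"
    and eq: "A @ W1 @ B = u @ W1 @ v" and "length A \<le> b" "length u \<le> b"
  shows "A @ W2 @ B = u @ W2 @ v"
proof (cases "length A \<le> length u")
  case True
  then obtain C where u: "u = A @ C" using eq
    by (metis append_eq_append_conv_if append_take_drop_id)
  have "W1 @ B = C @ W1 @ v" using eq u by simp
  then have "W2 @ B = C @ W2 @ v" using ok assms u by auto
  then show ?thesis using u by simp
next
  case False
  then obtain C where u: "A = u @ C" using eq
    by (metis append_eq_append_conv_if append_take_drop_id nat_le_linear)
  have "W1 @ v = C @ W1 @ B" using eq u by simp
  then have "W2 @ v = C @ W2 @ B" using ok assms u by auto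
  then show ?thesis using u by simp
qed


lemma shift_pr:
  assumes "W @ B = C @ W @ B'" "C \<noteq> []"
  shows "pr W (length C)"
  unfolding pr_def
proof (intro conjI allI impI)
  show "0 < length C" using assms by simp
  fix i assume i: "i + length C < length W"
  have "(W @ B) ! (i + length C) = (C @ W @ B') ! (i + length C)" using assms(1) by simp
  then show "W ! i = W ! (i + length C)" using i by (simp add: nth_append)
qed

lemma pr_is_period: "pr w g \<Longrightarrow> g \<le> length w \<Longrightarrow> is_period w g"
  unfolding pr_def is_period_def by auto

lemma len_rep: "length (concat (replicate c R)) = c * length R" by (induction c) auto

theorem fact1:
  fixes tau l :: nat and Sk S Q' :: "'a list" and hash :: 'a
  assumes "tau \<ge> 1" and "l > 10 * tau" and "length Sk \<ge> l"
    and "hash \<notin> set Sk" and "hash \<notin> set S"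
    and "valid_Q' hash tau (Qk tau l Sk) Q'"
    and "length S \<le> length (Qk tau l Sk) + 4 * tau"
    and "\<exists>i. occ_at (Qk tau l Sk) S i"
  shows "(\<forall>u v. S = u @ Qk tau l Sk @ v \<longrightarrow> u @ Q' @ v = rk (Qk tau l Sk) Q' S)
       \<and> (\<forall>u v. rk (Qk tau l Sk) Q' S = u @ Q' @ v \<longrightarrow> u @ Qk tau l Sk @ v = S)"
proof -
  define Q where "Q = Qk tau l Sk"
  define m where "m = length Q"
  have m: "m = l - 2 * tau" using assms(3) unfolding m_def Q_def Qk_def by simp
  have m8: "m > 8 * tau" using m assms(2) by simp
  define p where "p = per Q"
  have ipm: "is_period Q m" unfolding is_period_def using m8 m_def by auto
  have ipp: "is_period Q p" unfolding p_def per_def using ipm by (rule LeastI)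
  have pmin: "\<And>g. is_period Q g \<Longrightarrow> p \<le> g" unfolding p_def per_def by (rule Least_le)
  have prp: "pr Q p" using ipp unfolding is_period_def pr_def by auto
  have p0: "p > 0" "p \<le> m" using ipp unfolding is_period_def m_def by auto
  define i0 where "i0 = (LEAST i. occ_at Q S i)"
  have occ: "occ_at Q S i0" unfolding i0_def using assms(8) Q_def by (metis LeastI)
  define A where "A = take i0 S"
  define B where "B = drop (i0 + m) S"
  have SA: "S = A @ Q @ B"
  proof -
    have "S = take i0 S @ drop i0 S" by simp
    also have "drop i0 S = take m (drop i0 S) @ drop m (drop i0 S)" by (rule append_take_drop_id[symmetric])
    finally show ?thesis using occ unfolding occ_at_def A_def B_def m_def by (simp add: add.commute)
  qed
  have rkS: "rk Q Q' S = A @ Q' @ B"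
    using assms(8) unfolding rk_def Q_def[symmetric] i0_def[symmetric] A_def B_def m_def
    by (simp add: Let_def)
  have lenAB: "length A + length B \<le> 4 * tau"
  proof -
    have "length S = length A + m + length B" using SA m_def by simp
    then show ?thesis using assms(7) Q_def m_def by simp
  qed
  have hA: "hash \<notin> set A" "hash \<notin> set B" using assms(5) SA by auto
  have partA: "A @ Q @ B = u @ Q @ v \<Longrightarrow> (\<And>C B B'. length C \<le> 4 * tau \<Longrightarrow> Q @ B = C @ Q @ B' \<Longrightarrow> Q' @ B = C @ Q' @ B')
     \<Longrightarrow> u @ Q' @ v = A @ Q' @ B" for u v
  proof -
    assume e: "A @ Q @ B = u @ Q @ v" and ok: "\<And>C B B'. length C \<le> 4 * tau \<Longrightarrow> Q @ B = C @ Q @ B' \<Longrightarrow> Q' @ B = C @ Q' @ B'"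
    have "length (A @ Q @ B) = length (u @ Q @ v)" using e by simp
    then have "length u \<le> 4 * tau" using lenAB by simp
    then show ?thesis using generic[OF ok e] lenAB by auto
  qed
  from assms(6)[folded Q_def, unfolded valid_Q'_def p_def[symmetric]]
  show ?thesis
  proof (elim disjE conjE exE)
    assume pb: "4 * tau < p" and Qh: "Q' = [hash]"
    have okA: "Q' @ B1 = C @ Q' @ B'" if "length C \<le> 4 * tau" "Q @ B1 = C @ Q @ B'" for C B1 B'
    proof (cases "C = []")
      case True then show ?thesis using that by simp
    next
      case False
      have "pr Q (length C)" using shift_pr that False by blast
      moreover have "length C \<le> m" using that m8 by simp
      ultimately have "p \<le> length C" using pmin pr_is_period m_def by blast
      then show ?thesis using that pb by simp
    qed
    show ?thesis
    proof (intro conjI allI impI)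
      fix u v assume "S = u @ Qk tau l Sk @ v"
      then have "A @ Q @ B = u @ Q @ v" using SA Q_def by simp
      from partA[OF this okA] show "u @ Q' @ v = rk (Qk tau l Sk) Q' S"
        using rkS Q_def by simp
    next
      fix u v assume "rk (Qk tau l Sk) Q' S = u @ Q' @ v"
      then have "A @ hash # B = u @ hash # v" using rkS Qh Q_def by simp
      then have "u = A \<and> v = B" using hash_split hA by metis
      then show "u @ Qk tau l Sk @ v = S" using SA Q_def by simp
    qed
  next
    fix t t' \<rho>' w
    assume pl: "p \<le> 4 * tau" and Qe: "Q = concat (replicate t (take p Q)) @ \<rho>'"
      and w: "\<rho>' @ w = take p Q" and tt: "t' \<le> t"
      and Q'e: "Q' = concat (replicate t' (take p Q)) @ \<rho>'"
      and l8: "8 * tau \<le> length Q'" and "length Q' < 12 * tau"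
    define R where "R = take p Q"
    have lR: "length R = p" using p0 m_def R_def by simp
    have lrho: "length \<rho>' \<le> p" using w lR R_def by (metis le_add1 length_append)
    have Q'R: "Q' = concat (replicate t' R) @ \<rho>'" using Q'e R_def by simp
    have QR: "Q = concat (replicate t R) @ \<rho>'" using Qe R_def by simp
    have lQ': "length Q' = t' * p + length \<rho>'" using lR by (simp add: Q'R len_rep)
    have lQ: "m = t * p + length \<rho>'" proof -
      have "length Q = t * p + length \<rho>'" using lR by (subst QR) (simp add: len_rep)
      then show ?thesis using m_def by simp
    qed
    define e where "e = t - t'"
    have QQ': "Q = concat (replicate e R) @ Q'"
    proof -
      have "concat (replicate t R) = concat (replicate e R) @ concat (replicate t' R)"
        using tt e_def by (metis concat_append le_add_diff_inverse2 replicate_add)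
      then show ?thesis using Qe Q'e R_def by simp
    qed
    have prQ': "pr Q' p" using rep_pr[OF lR p0(1)] w Q'e R_def by blast
    have t1: "t' \<ge> 1"
    proof (rule ccontr)
      assume "\<not> t' \<ge> 1" then have "t' = 0" by simp
      then show False using lQ' lrho l8 pl assms(1) by simp
    qed
    have tQ': "take p Q' = R" using rep_take[OF t1, of R \<rho>'] Q'e R_def lR by simp
    have minQ: "\<forall>g. pr Q g \<longrightarrow> g dvd p \<longrightarrow> g = p"
    proof (intro allI impI)
      fix g assume g: "pr Q g" "g dvd p"
      then have "g \<le> p" using p0 by (simp add: dvd_imp_le)
      then have "p \<le> g" using pmin pr_is_period g p0 m_def by (metis order_trans)
      then show "g = p" using \<open>g \<le> p\<close> by simp
    qed
    have minQ': "\<forall>g. pr Q' g \<longrightarrow> g dvd p \<longrightarrow> g = p"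
    proof (intro allI impI)
      fix g assume g: "pr Q' g" "g dvd p"
      have "p \<le> length Q'" using l8 pl by simp
      then have "pr Q g" using pr_lift[OF g(1) prp g(2)] p0 m_def tQ' R_def by simp
      then show "g = p" using minQ g by simp
    qed
    have Cform: "C = concat (replicate c R)" if "p dvd length C" "C = take (length C) (concat (replicate s R) @ \<rho>')"
       "length C + p \<le> s * p + length \<rho>'" "c = length C div p" for C c s
    proof -
      have "c * p + p \<le> s * p + p" using that lrho by simp
      then have "c \<le> s" using p0 by simp
      have "length C = c * length R" using that lR by simp
      then show ?thesis using that rep_take[OF \<open>c \<le> s\<close>] by metis
    qed
    have okA: "Q' @ B1 = C @ Q' @ B'" if "length C \<le> 4 * tau" "Q @ B1 = C @ Q @ B'" for C B1 B'
    proof -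
      have "length C + p \<le> m" using that pl m8 by simp
      then have d: "p dvd length C \<and> C = take (length C) Q" using dvd_shift[OF that(2) _ prp minQ] m_def by simp
      then have Cc: "C = concat (replicate (length C div p) R)"
        using Cform[of C t] Qe R_def lQ \<open>length C + p \<le> m\<close> by simp
      have "concat (replicate e R) @ Q' @ B1 = C @ concat (replicate e R) @ Q' @ B'"
        using that(2) QQ' by simp
      also have "\<dots> = concat (replicate e R) @ C @ Q' @ B'" using Cc rep_comm by (metis append.assoc)
      finally show ?thesis by simp
    qed
    have okB: "Q @ B1 = C @ Q @ B'" if "length C \<le> 4 * tau" "Q' @ B1 = C @ Q' @ B'" for C B1 B'
    proof -
      have "length C + p \<le> length Q'" using that pl l8 by simp
      then have d: "p dvd length C \<and> C = take (length C) Q'" using dvd_shift[OF that(2) _ prQ' minQ'] by simp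
      then have Cc: "C = concat (replicate (length C div p) R)"
        using Cform[of C t'] Q'e R_def lQ' \<open>length C + p \<le> length Q'\<close> by simp
      have "Q @ B1 = concat (replicate e R) @ C @ Q' @ B'" using that(2) QQ' by simp
      also have "\<dots> = C @ concat (replicate e R) @ Q' @ B'" using Cc rep_comm by (metis append.assoc)
      finally show ?thesis using QQ' by simp
    qed
    show ?thesis
    proof (intro conjI allI impI)
      fix u v assume "S = u @ Qk tau l Sk @ v"
      then have "A @ Q @ B = u @ Q @ v" using SA Q_def by simp
      from partA[OF this okA] show "u @ Q' @ v = rk (Qk tau l Sk) Q' S"
        using rkS Q_def by simp
    next
      fix u v assume e1: "rk (Qk tau l Sk) Q' S = u @ Q' @ v"
      then have e2: "A @ Q' @ B = u @ Q' @ v" using rkS Q_def by simp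
      have "length (A @ Q' @ B) = length (u @ Q' @ v)" using e2 by simp
      then have "length u \<le> 4 * tau" using lenAB by simp
      then have "A @ Q @ B = u @ Q @ v" using generic[OF okB e2] lenAB by auto
      then show "u @ Qk tau l Sk @ v = S" using SA Q_def by simp
    qed
  qed
qed

end
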